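(* Let $n\geq2$ be finite and let $\mathfrak A\in SA_n$. If $\mathfrak A$ is atomic and $\sum_{x\in\mathrm{At}\mathfrak A}s_\tau x=1$ for every $\tau\in{}^nn$, then $\mathfrak A$ is completely representable. Conversely, if $\mathfrak A$ is completely representable, then $\mathfrak A$ is atomic and $\sum_{x\in\mathrm{At}\mathfrak A}s_\tau x=1$ for every $\tau\in{}^nn$.
   Context: $SA_n=\mathbf{Mod}(\Sigma'_n)$, where $\Sigma'_n$ (signature $\wedge,-,s^i_j,s_{ij}$, $i\neq j<n$) consists of the Boolean axioms, equations saying each $s^i_j,s_{ij}$ is a Boolean endomorphism, and $t_1(x)=t_2(x)$ for all words $t_1,t_2$ with $\hat t_1=\hat t_2$ in ${}^nn$; here $\hat{}$ sends the empty word to $Id_n$, $(s_{ij}t)^{\hat{}}=[i,j]\circ\hat t$, $(s^i_jt)^{\hat{}}=[i/j]\circ\hat t$, with $[i,j]$ the transposition and $[i/j]$ the map sending $i$ to $j$ and fixing the rest. For $\tau\in{}^nn$, $s_\tau$ is the term operation $t$ for any word $t$ with $\hat t=\tau$. A set $D\subseteq{}^nU$ is dipermutable if $s\circ[i/j]\in D$ and $s\circ[i,j]\in D$ for all $s\in D$, $i\neq j$; $\wp(D)$ has operations $\cap$, complement relative to $D$, $S^i_j(X)=\{q\in D:q\circ[i/j]\in X\}$, $S_{ij}(X)=\{q\in D:q\circ[i,j]\in X\}$. $\mathfrak A$ is completely representable if there is an injective homomorphism $f:\mathfrak A\to\wp(D)$, $D$ dipermutable, with $f(\prod Y)=\bigcap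 f[Y]$ whenever $\prod Y$ exists. $\mathrm{At}\mathfrak A$ is the set of atoms. *)

theory Defs
  imports Main
begin

definition repl_map :: "nat \<Rightarrow> nat \<Rightarrow> nat \<Rightarrow> nat" where
  "repl_map i j = (\<lambda>k. if k = i then j else k)"

definition transp_map :: "nat \<Rightarrow> nat \<Rightarrow> nat \<Rightarrow> nat" where
  "transp_map i j = (\<lambda>k. if k = i then j else if k = j then i else k)"

(* Letters of words: SRep i j is s^i_j, SSw i j is s_ij *)
datatype sa_letter = SRep nat nat | SSw nat nat

fun letter_map :: "sa_letter \<Rightarrow> nat \<Rightarrow> nat" where
  "letter_map (SRep i j) = repl_map i j"
| "letter_map (SSw i j) = transp_map i j"

fun letter_ok :: "nat \<Rightarrow> sa_letter \<Rightarrow> bool" where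
  "letter_ok n (SRep i j) = (i \<noteq> j \<and> i < n \<and> j < n)"
| "letter_ok n (SSw i j) = (i \<noteq> j \<and> i < n \<and> j < n)"

definition word_ok :: "nat \<Rightarrow> sa_letter list \<Rightarrow> bool" where
  "word_ok n w = (\<forall>l\<in>set w. letter_ok n l)"

fun word_hat :: "sa_letter list \<Rightarrow> nat \<Rightarrow> nat" where
  "word_hat [] = id"
| "word_hat (l # w) = letter_map l \<circ> word_hat w"

fun word_eval :: "(nat \<Rightarrow> nat \<Rightarrow> 'a \<Rightarrow> 'a) \<Rightarrow> (nat \<Rightarrow> nat \<Rightarrow> 'a \<Rightarrow> 'a)
                   \<Rightarrow> sa_letter list \<Rightarrow> 'a \<Rightarrow> 'a" where
  "word_eval ss sw [] x = x"
| "word_eval ss sw (SRep i j # w) x = ss i j (word_eval ss sw w x)"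
| "word_eval ss sw (SSw i j # w) x = sw i j (word_eval ss sw w x)"

definition bool_endo :: "('a::boolean_algebra \<Rightarrow> 'a) \<Rightarrow> bool" where
  "bool_endo h = (\<forall>x y. h (inf x y) = inf (h x) (h y) \<and> h (- x) = - h x)"

(* membership in SA_n = Mod(\<Sigma>'_n); the Boolean axioms are given by the type class *)
definition SA :: "nat \<Rightarrow> (nat \<Rightarrow> nat \<Rightarrow> 'a::boolean_algebra \<Rightarrow> 'a)
                  \<Rightarrow> (nat \<Rightarrow> nat \<Rightarrow> 'a \<Rightarrow> 'a) \<Rightarrow> bool" where
  "SA n ss sw =
     ((\<forall>i j. i \<noteq> j \<and> i < n \<and> j < n \<longrightarrow> bool_endo (ss i j) \<and> bool_endo (sw i j)) \<and>
      (\<forall>w1 w2. word_ok n w1 \<and> word_ok n w2 \<and> (\<forall>k<n. word_hat w1 k = word_hat w2 k)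
          \<longrightarrow> (\<forall>x. word_eval ss sw w1 x = word_eval ss sw w2 x)))"

definition is_nmap :: "nat \<Rightarrow> (nat \<Rightarrow> nat) \<Rightarrow> bool" where
  "is_nmap n \<tau> = (\<forall>k<n. \<tau> k < n)"

definition s_tau :: "nat \<Rightarrow> (nat \<Rightarrow> nat \<Rightarrow> 'a \<Rightarrow> 'a) \<Rightarrow> (nat \<Rightarrow> nat \<Rightarrow> 'a \<Rightarrow> 'a)
                     \<Rightarrow> (nat \<Rightarrow> nat) \<Rightarrow> 'a \<Rightarrow> 'a" where
  "s_tau n ss sw \<tau> =
     word_eval ss sw (SOME w. word_ok n w \<and> (\<forall>k<n. word_hat w k = \<tau> k))"

definition is_atom :: "'a::boolean_algebra \<Rightarrow> bool" where
  "is_atom x = (x \<noteq> bot \<and> (\<forall>y. y \<le> x \<longrightarrow> y = bot \<or> y = x))"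

definition atomic :: "'a::boolean_algebra itself \<Rightarrow> bool" where
  "atomic _ = (\<forall>x::'a. x \<noteq> bot \<longrightarrow> (\<exists>a. is_atom a \<and> a \<le> x))"

definition is_sum :: "'a::boolean_algebra set \<Rightarrow> 'a \<Rightarrow> bool" where
  "is_sum X a = ((\<forall>x\<in>X. x \<le> a) \<and> (\<forall>b. (\<forall>x\<in>X. x \<le> b) \<longrightarrow> a \<le> b))"

definition is_prod :: "'a::boolean_algebra set \<Rightarrow> 'a \<Rightarrow> bool" where
  "is_prod X a = ((\<forall>x\<in>X. a \<le> x) \<and> (\<forall>b. (\<forall>x\<in>X. b \<le> x) \<longrightarrow> b \<le> a))"

definition nseqs :: "nat \<Rightarrow> 'b set \<Rightarrow> (nat \<Rightarrow> 'b) set" where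
  "nseqs n U = {s. (\<forall>k<n. s k \<in> U) \<and> (\<forall>k\<ge>n. s k = undefined)}"

definition dipermutable :: "nat \<Rightarrow> 'b set \<Rightarrow> (nat \<Rightarrow> 'b) set \<Rightarrow> bool" where
  "dipermutable n U D =
     (D \<subseteq> nseqs n U \<and>
      (\<forall>s\<in>D. \<forall>i j. i \<noteq> j \<and> i < n \<and> j < n \<longrightarrow>
          s \<circ> repl_map i j \<in> D \<and> s \<circ> transp_map i j \<in> D))"

definition complete_rep :: "nat \<Rightarrow> (nat \<Rightarrow> nat \<Rightarrow> 'a::boolean_algebra \<Rightarrow> 'a)
                  \<Rightarrow> (nat \<Rightarrow> nat \<Rightarrow> 'a \<Rightarrow> 'a) \<Rightarrow> (nat \<Rightarrow> 'b) set \<Rightarrow> ('a \<Rightarrow> (nat \<Rightarrow> 'b) set) \<Rightarrow> bool" where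
  "complete_rep n ss sw D f =
     ((\<forall>x. f x \<subseteq> D) \<and> inj f \<and>
      (\<forall>x y. f (inf x y) = f x \<inter> f y) \<and>
      (\<forall>x. f (- x) = D - f x) \<and>
      (\<forall>i j x. i \<noteq> j \<and> i < n \<and> j < n \<longrightarrow>
          f (ss i j x) = {q\<in>D. q \<circ> repl_map i j \<in> f x} \<and>
          f (sw i j x) = {q\<in>D. q \<circ> transp_map i j \<in> f x}) \<and>
      (\<forall>Y a. is_prod Y a \<longrightarrow> f a = D \<inter> \<Inter> (f ` Y)))"

definition completely_representable_in ::
  "'b itself \<Rightarrow> nat \<Rightarrow> (nat \<Rightarrow> nat \<Rightarrow> 'a::boolean_algebra \<Rightarrow> 'a) \<Rightarrow> (nat \<Rightarrow> nat \<Rightarrow> 'a \<Rightarrow> 'a) \<Rightarrow> bool" where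
  "completely_representable_in _ n ss sw =
     (\<exists>(U::'b set) D f. dipermutable n U D \<and> complete_rep n ss sw D f)"

end

theory Submission
  imports Defs
begin
unbundle lattice_syntax


lemma hat_fix: "word_ok n w \<Longrightarrow> n \<le> k \<Longrightarrow> word_hat w k = k"
proof (induction w)
  case Nil then show ?case by simp
next
  case (Cons l w) then show ?case
    by (cases l) (auto simp: word_ok_def repl_map_def transp_map_def)
qed

lemma hat_lt: "word_ok n w \<Longrightarrow> k < n \<Longrightarrow> word_hat w k < n"
proof (induction w arbitrary: k)
  case Nil then show ?case by simp
next
  case (Cons l w) then show ?case
    by (cases l) (auto simp: word_ok_def repl_map_def transp_map_def)
qed

lemma hat_append: "word_hat (w1 @ w2) = word_hat w1 \<circ> word_hat w2"
  by (induction w1) (auto simp: comp_assoc)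

lemma eval_append: "word_eval ss sw (w1 @ w2) x = word_eval ss sw w1 (word_eval ss sw w2 x)"
proof (induction w1)
  case Nil then show ?case by simp
next
  case (Cons l w) then show ?case by (cases l) auto
qed

lemma word_ok_append: "word_ok n (w1 @ w2) = (word_ok n w1 \<and> word_ok n w2)"
  by (auto simp: word_ok_def)

definition has_word :: "nat \<Rightarrow> (nat \<Rightarrow> nat) \<Rightarrow> bool" where
  "has_word n \<tau> = (\<exists>w. word_ok n w \<and> (\<forall>k<n. word_hat w k = \<tau> k))"

lemma perm_word:
  "\<forall>\<tau>. inj_on \<tau> {..<n} \<and> (\<forall>k<n. \<tau> k < n) \<and> card {k. k<n \<and> \<tau> k \<noteq> k} = c \<longrightarrow> has_word n \<tau>"
proof (induction c rule: less_induct)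
  case (less c)
  show ?case
  proof (intro allI impI)
    fix \<tau> assume H: "inj_on \<tau> {..<n} \<and> (\<forall>k<n. \<tau> k < n) \<and> card {k. k<n \<and> \<tau> k \<noteq> k} = c"
    show "has_word n \<tau>"
    proof (cases "\<forall>k<n. \<tau> k = k")
      case True
      then show ?thesis unfolding has_word_def by (rule_tac x="[]" in exI) (auto simp: word_ok_def)
    next
      case False
      then obtain k where k: "k < n" "\<tau> k \<noteq> k" by auto
      have "\<tau> ` {..<n} = {..<n}" using H by (intro endo_inj_surj) auto
      then have "k \<in> \<tau> ` {..<n}" using k by simp
      then obtain m where m: "m < n" "\<tau> m = k" by auto
      have mk: "m \<noteq> k" using m k by auto
      define \<sigma> where "\<sigma> = \<tau> \<circ> transp_map k m"
      have tr: "\<And>x. x < n \<Longrightarrow> transp_map k m x < n" using k m by (auto simp: transp_map_def)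
      have trinv: "\<And>x. transp_map k m (transp_map k m x) = x" by (auto simp: transp_map_def)
      have inj1: "inj_on (transp_map k m) {..<n}"
        by (rule inj_onI) (metis trinv)
      have tk: "transp_map k m k = m" and tm: "transp_map k m m = k"
        and to: "\<And>x. x \<noteq> k \<Longrightarrow> x \<noteq> m \<Longrightarrow> transp_map k m x = x"
        by (simp_all add: transp_map_def)
      have A1: "inj_on \<sigma> {..<n}"
      proof (rule inj_onI)
        fix x y assume xy: "x \<in> {..<n}" "y \<in> {..<n}" "\<sigma> x = \<sigma> y"
        have "transp_map k m x = transp_map k m y"
          using H xy tr unfolding \<sigma>_def inj_on_def by simp
        then show "x = y" by (metis trinv)
      qed
      have A2: "\<forall>x<n. \<sigma> x < n" using H tr by (simp add: \<sigma>_def)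
      have sub: "{x. x<n \<and> \<sigma> x \<noteq> x} \<subset> {x. x<n \<and> \<tau> x \<noteq> x}"
      proof -
        have "{x. x<n \<and> \<sigma> x \<noteq> x} \<subseteq> {x. x<n \<and> \<tau> x \<noteq> x} - {k}"
        proof
          fix x assume x: "x \<in> {x. x<n \<and> \<sigma> x \<noteq> x}"
          have "x \<noteq> k" using x m tk by (auto simp: \<sigma>_def)
          moreover have "\<tau> x \<noteq> x"
          proof (cases "x = m")
            case True then show ?thesis using m mk by simp
          next
            case False then show ?thesis using x to \<open>x \<noteq> k\<close> by (simp add: \<sigma>_def)
          qed
          ultimately show "x \<in> {x. x<n \<and> \<tau> x \<noteq> x} - {k}" using x by simp
        qed
        moreover have "k \<in> {x. x<n \<and> \<tau> x \<noteq> x}" using k by simp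
        ultimately show ?thesis by blast
      qed
      have "card {x. x<n \<and> \<sigma> x \<noteq> x} < card {x. x<n \<and> \<tau> x \<noteq> x}"
        by (rule psubset_card_mono[OF _ sub]) simp
      then have C1: "card {x. x<n \<and> \<sigma> x \<noteq> x} < c" using H by simp
      have "has_word n \<sigma>" by (rule less[rule_format, OF C1]) (intro conjI A1 A2 refl)
      then obtain w where w: "word_ok n w" "\<forall>x<n. word_hat w x = \<sigma> x" unfolding has_word_def by blast
      show ?thesis unfolding has_word_def
      proof (rule exI[of _ "w @ [SSw k m]"], intro conjI allI impI)
        show "word_ok n (w @ [SSw k m])" using w k m mk by (auto simp: word_ok_def)
      next
        fix x assume "x < n"
        then show "word_hat (w @ [SSw k m]) x = \<tau> x"
          using w tr trinv by (simp add: hat_append \<sigma>_def)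
      qed
    qed
  qed
qed

lemma all_word:
  "\<forall>\<tau>. (\<forall>k<n. \<tau> k < n) \<and> n - card (\<tau> ` {..<n}) = c \<longrightarrow> has_word n \<tau>"
proof (induction c rule: less_induct)
  case (less c)
  show ?case
  proof (intro allI impI)
    fix \<tau> assume H: "(\<forall>k<n. \<tau> k < n) \<and> n - card (\<tau> ` {..<n}) = c"
    show "has_word n \<tau>"
    proof (cases "inj_on \<tau> {..<n}")
      case True
      have "inj_on \<tau> {..<n} \<and> (\<forall>k<n. \<tau> k < n) \<and> card {k. k<n \<and> \<tau> k \<noteq> k} = card {k. k<n \<and> \<tau> k \<noteq> k}"
        using True H by simp
      then show ?thesis by (rule perm_word[rule_format])
    next
      case False
      then obtain i j where ij: "i < n" "j < n" "i \<noteq> j" "\<tau> i = \<tau> j"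
        unfolding inj_on_def by auto
      have "card (\<tau> ` {..<n}) \<noteq> n" using False
        using eq_card_imp_inj_on[of "{..<n}" \<tau>] by auto
      moreover have "card (\<tau> ` {..<n}) \<le> n" using card_image_le[of "{..<n}" \<tau>] by simp
      ultimately have lt: "card (\<tau> ` {..<n}) < n" by simp
      have sub: "\<tau> ` {..<n} \<subseteq> {..<n}" using H by auto
      have "\<tau> ` {..<n} \<noteq> {..<n}" using lt by auto
      then obtain v where v: "v < n" "v \<notin> \<tau> ` {..<n}" using sub by auto
      define \<tau>' where "\<tau>' = \<tau>(i := v)"
      have img: "\<tau>' ` {..<n} = insert v (\<tau> ` {..<n})"
      proof
        show "\<tau>' ` {..<n} \<subseteq> insert v (\<tau> ` {..<n})" by (auto simp: \<tau>'_def)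
        show "insert v (\<tau> ` {..<n}) \<subseteq> \<tau>' ` {..<n}"
        proof
          fix y assume "y \<in> insert v (\<tau> ` {..<n})"
          then consider "y = v" | x where "x < n" "y = \<tau> x" by auto
          then show "y \<in> \<tau>' ` {..<n}"
          proof cases
            case 1 then show ?thesis using ij by (auto simp: \<tau>'_def image_iff)
          next
            case 2
            show ?thesis
            proof (cases "x = i")
              case True
              then have "y = \<tau>' j" using 2 ij by (simp add: \<tau>'_def)
              then show ?thesis using ij by auto
            next
              case False
              then have "y = \<tau>' x" using 2 by (simp add: \<tau>'_def)
              then show ?thesis using 2 by auto
            qed
          qed
        qed
      qed
      have cs: "card (\<tau>' ` {..<n}) = Suc (card (\<tau> ` {..<n}))" using img v by simp
      have ar: "n - Suc a < n - a" if "a < n" for a :: nat using that by simp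
      have C1: "n - card (\<tau>' ` {..<n}) < c" unfolding cs using H ar[OF lt] by simp
      have A2: "\<forall>k<n. \<tau>' k < n" using H v by (auto simp: \<tau>'_def)
      have "has_word n \<tau>'" by (rule less[rule_format, OF C1]) (intro conjI A2 refl)
      then obtain w where w: "word_ok n w" "\<forall>x<n. word_hat w x = \<tau>' x" unfolding has_word_def by blast
      show ?thesis unfolding has_word_def
      proof (rule exI[of _ "w @ [SRep i j]"], intro conjI allI impI)
        show "word_ok n (w @ [SRep i j])" using w ij by (auto simp: word_ok_def)
      next
        fix x assume "x < n"
        show "word_hat (w @ [SRep i j]) x = \<tau> x"
        proof (cases "x = i")
          case True
          then have "word_hat (w @ [SRep i j]) x = word_hat w j" by (simp add: hat_append repl_map_def)
          also have "\<dots> = \<tau>' j" using w ij by simp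
          also have "\<dots> = \<tau> x" using ij True by (simp add: \<tau>'_def)
          finally show ?thesis .
        next
          case False
          then have "word_hat (w @ [SRep i j]) x = word_hat w x" by (simp add: hat_append repl_map_def)
          also have "\<dots> = \<tau>' x" using w \<open>x < n\<close> by simp
          also have "\<dots> = \<tau> x" using False by (simp add: \<tau>'_def)
          finally show ?thesis .
        qed
      qed
    qed
  qed
qed

lemma every_word: "is_nmap n \<tau> \<Longrightarrow> has_word n \<tau>"
proof -
  assume "is_nmap n \<tau>"
  then have "(\<forall>k<n. \<tau> k < n) \<and> n - card (\<tau> ` {..<n}) = n - card (\<tau> ` {..<n})"
    unfolding is_nmap_def by simp
  then show ?thesis by (rule all_word[rule_format])
qed



lemma s_tau_word:
  assumes SA: "SA n ss sw" and w: "word_ok n w" "\<forall>k<n. word_hat w k = \<tau> k"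
  shows "s_tau n ss sw \<tau> = word_eval ss sw w"
proof -
  let ?P = "\<lambda>w. word_ok n w \<and> (\<forall>k<n. word_hat w k = \<tau> k)"
  have P: "?P (SOME w. ?P w)" by (rule someI[of ?P w]) (use w in simp)
  have E: "\<forall>w1 w2. word_ok n w1 \<and> word_ok n w2 \<and> (\<forall>k<n. word_hat w1 k = word_hat w2 k)
          \<longrightarrow> (\<forall>x. word_eval ss sw w1 x = word_eval ss sw w2 x)"
    using SA unfolding SA_def by (rule conjunct2)
  have "\<forall>k<n. word_hat (SOME w. ?P w) k = word_hat w k" using P w by simp
  then have "\<forall>x. word_eval ss sw (SOME w. ?P w) x = word_eval ss sw w x"
    using E P w(1) by blast
  then show ?thesis unfolding s_tau_def by (simp add: fun_eq_iff)
qed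

lemma get_word:
  assumes "SA n ss sw" "is_nmap n \<tau>"
  obtains w where "word_ok n w" "\<forall>k<n. word_hat w k = \<tau> k" "s_tau n ss sw \<tau> = word_eval ss sw w"
proof -
  obtain w where w: "word_ok n w" "\<forall>k<n. word_hat w k = \<tau> k"
    using every_word[OF assms(2)] unfolding has_word_def by blast
  show ?thesis by (rule that[OF w s_tau_word[OF assms(1) w]])
qed

lemma eval_endo:
  assumes SA: "SA n ss sw" shows "word_ok n w \<Longrightarrow>
    word_eval ss sw w (x \<sqinter> y) = word_eval ss sw w x \<sqinter> word_eval ss sw w y \<and>
    word_eval ss sw w (- x) = - word_eval ss sw w x"
proof (induction w arbitrary: x y)
  case Nil then show ?case by simp
next
  case (Cons l w)
  then have ok: "word_ok n w" "letter_ok n l" by (auto simp: word_ok_def)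
  then have IH: "word_eval ss sw w (x \<sqinter> y) = word_eval ss sw w x \<sqinter> word_eval ss sw w y"
    "word_eval ss sw w (- x) = - word_eval ss sw w x" using Cons.IH by auto
  show ?case
  proof (cases l)
    case (SRep i j)
    then have "bool_endo (ss i j)" using SA ok unfolding SA_def by auto
    then show ?thesis using SRep IH unfolding bool_endo_def by simp
  next
    case (SSw i j)
    then have "bool_endo (sw i j)" using SA ok unfolding SA_def by auto
    then show ?thesis using SSw IH unfolding bool_endo_def by simp
  qed
qed

context
  fixes n :: nat and ss sw :: "nat \<Rightarrow> nat \<Rightarrow> 'a::boolean_algebra \<Rightarrow> 'a"
  assumes SA: "SA n ss sw"
begin

abbreviation "S \<equiv> s_tau n ss sw"

lemma S_inf: "is_nmap n \<tau> \<Longrightarrow> S \<tau> (x \<sqinter> y) = S \<tau> x \<sqinter> S \<tau> y"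
proof -
  assume "is_nmap n \<tau>"
  then obtain w where w: "word_ok n w" "S \<tau> = word_eval ss sw w" using get_word[OF SA] by blast
  show ?thesis using eval_endo[OF SA w(1)] w(2) by simp
qed

lemma S_compl: "is_nmap n \<tau> \<Longrightarrow> S \<tau> (- x) = - S \<tau> x"
proof -
  assume "is_nmap n \<tau>"
  then obtain w where w: "word_ok n w" "S \<tau> = word_eval ss sw w" using get_word[OF SA] by blast
  show ?thesis using eval_endo[OF SA w(1)] w(2) by simp
qed

lemma S_mono: "is_nmap n \<tau> \<Longrightarrow> x \<le> y \<Longrightarrow> S \<tau> x \<le> S \<tau> y"
proof -
  assume t: "is_nmap n \<tau>" and "x \<le> y"
  then have "x = x \<sqinter> y" by (simp add: inf.absorb1)
  then have "S \<tau> x = S \<tau> x \<sqinter> S \<tau> y" using S_inf[OF t] by metis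
  then show ?thesis by (metis inf.orderI)
qed

lemma S_bot: "is_nmap n \<tau> \<Longrightarrow> S \<tau> bot = bot"
proof -
  assume t: "is_nmap n \<tau>"
  have "S \<tau> bot = S \<tau> (bot \<sqinter> - bot)" by simp
  also have "\<dots> = S \<tau> bot \<sqinter> - S \<tau> bot" by (simp only: S_inf[OF t] S_compl[OF t])
  also have "\<dots> = bot" by simp
  finally show ?thesis .
qed

lemma S_id: "S id x = x"
  using s_tau_word[OF SA, of "[]" id] by (simp add: word_ok_def)

lemma S_ss:
  assumes t: "is_nmap n \<tau>" and ij: "i \<noteq> j" "i < n" "j < n"
  shows "S \<tau> (ss i j x) = S (\<tau> \<circ> repl_map i j) x"
proof -
  obtain w where w: "word_ok n w" "\<forall>k<n. word_hat w k = \<tau> k" "S \<tau> = word_eval ss sw w"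
    using get_word[OF SA t] by blast
  have ok: "word_ok n (w @ [SRep i j])" using w ij by (simp add: word_ok_def)
  have "\<forall>k<n. word_hat (w @ [SRep i j]) k = (\<tau> \<circ> repl_map i j) k"
    using w ij by (simp add: hat_append repl_map_def)
  then have "S (\<tau> \<circ> repl_map i j) = word_eval ss sw (w @ [SRep i j])"
    using s_tau_word[OF SA ok] by simp
  then show ?thesis using w by (simp add: eval_append)
qed

lemma S_sw:
  assumes t: "is_nmap n \<tau>" and ij: "i \<noteq> j" "i < n" "j < n"
  shows "S \<tau> (sw i j x) = S (\<tau> \<circ> transp_map i j) x"
proof -
  obtain w where w: "word_ok n w" "\<forall>k<n. word_hat w k = \<tau> k" "S \<tau> = word_eval ss sw w"
    using get_word[OF SA t] by blast
  have ok: "word_ok n (w @ [SSw i j])" using w ij by (simp add: word_ok_def)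
  have "\<forall>k<n. word_hat (w @ [SSw i j]) k = (\<tau> \<circ> transp_map i j) k"
    using w ij by (simp add: hat_append transp_map_def)
  then have "S (\<tau> \<circ> transp_map i j) = word_eval ss sw (w @ [SSw i j])"
    using s_tau_word[OF SA ok] by simp
  then show ?thesis using w by (simp add: eval_append)
qed

end

lemma S_cong: "(\<forall>k<n. \<tau> k = \<sigma> k) \<Longrightarrow> s_tau n ss sw \<tau> = s_tau n ss sw \<sigma>"
proof -
  assume a: "\<forall>k<n. \<tau> k = \<sigma> k"
  have "(\<lambda>w. word_ok n w \<and> (\<forall>k<n. word_hat w k = \<tau> k)) = (\<lambda>w. word_ok n w \<and> (\<forall>k<n. word_hat w k = \<sigma> k))"
    using a by (auto simp: fun_eq_iff)
  then show ?thesis unfolding s_tau_def by simp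
qed

lemma atom_compl: "is_atom (a::'a::boolean_algebra) \<Longrightarrow> (a \<le> - z) = (\<not> a \<le> z)"
proof
  assume A: "is_atom a" "a \<le> - z"
  show "\<not> a \<le> z"
  proof
    assume "a \<le> z"
    then have "a \<le> z \<sqinter> - z" using A by (intro le_infI)
    then have "a = bot" by (simp add: bot_unique)
    then show False using A unfolding is_atom_def by simp
  qed
next
  assume A: "is_atom a" "\<not> a \<le> z"
  have "a \<sqinter> z \<le> a" by simp
  then have "a \<sqinter> z = bot \<or> a \<sqinter> z = a" using A unfolding is_atom_def by blast
  then have "a \<sqinter> z = bot" using A by (metis inf.orderI)
  then show "a \<le> - z" by (simp add: inf_shunt)
qed

lemma atom_inf: "is_atom (a::'a::boolean_algebra) \<Longrightarrow> a \<sqinter> y \<noteq> bot \<Longrightarrow> a \<le> y"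
proof -
  assume "is_atom a" "a \<sqinter> y \<noteq> bot"
  then have "\<not> a \<le> - y" by (simp add: inf_shunt)
  then show ?thesis using atom_compl[OF \<open>is_atom a\<close>, of "- y"] by simp
qed



definition seqf :: "nat \<Rightarrow> 'a \<Rightarrow> (nat \<Rightarrow> nat) \<Rightarrow> nat \<Rightarrow> 'a \<times> nat" where
  "seqf n a \<tau> = (\<lambda>k. if k < n then (a, \<tau> k) else undefined)"

lemma seqf_eq: "0 < n \<Longrightarrow> seqf n a \<tau> = seqf n b \<sigma> \<Longrightarrow> a = b \<and> (\<forall>k<n. \<tau> k = \<sigma> k)"
proof -
  assume n: "0 < n" and e: "seqf n a \<tau> = seqf n b \<sigma>"
  have "seqf n a \<tau> 0 = seqf n b \<sigma> 0" using e by simp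
  then have "a = b" using n by (simp add: seqf_def)
  moreover have "\<tau> k = \<sigma> k" if "k < n" for k
  proof -
    have "seqf n a \<tau> k = seqf n b \<sigma> k" using e by simp
    then show ?thesis using that by (simp add: seqf_def)
  qed
  ultimately show ?thesis by blast
qed

lemma seqf_repl: "i < n \<Longrightarrow> j < n \<Longrightarrow> seqf n a \<tau> \<circ> repl_map i j = seqf n a (\<tau> \<circ> repl_map i j)"
  by (auto simp: seqf_def repl_map_def fun_eq_iff)

lemma seqf_transp: "i < n \<Longrightarrow> j < n \<Longrightarrow> seqf n a \<tau> \<circ> transp_map i j = seqf n a (\<tau> \<circ> transp_map i j)"
  by (auto simp: seqf_def transp_map_def fun_eq_iff)

lemma nmap_repl: "is_nmap n \<tau> \<Longrightarrow> j < n \<Longrightarrow> is_nmap n (\<tau> \<circ> repl_map i j)"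
  by (auto simp: is_nmap_def repl_map_def)

lemma nmap_transp: "is_nmap n \<tau> \<Longrightarrow> i < n \<Longrightarrow> j < n \<Longrightarrow> is_nmap n (\<tau> \<circ> transp_map i j)"
  by (auto simp: is_nmap_def transp_map_def)

lemma nmap_id: "is_nmap n id" by (simp add: is_nmap_def)

context
  fixes n :: nat and ss sw :: "nat \<Rightarrow> nat \<Rightarrow> 'a::boolean_algebra \<Rightarrow> 'a"
  assumes SA: "SA n ss sw" and n2: "2 \<le> n"
    and at: "atomic TYPE('a)"
    and sums: "\<forall>\<tau>. is_nmap n \<tau> \<longrightarrow> is_sum {s_tau n ss sw \<tau> x | x. is_atom x} top"
begin

definition DD :: "(nat \<Rightarrow> 'a \<times> nat) set" where
  "DD = {seqf n a \<tau> | a \<tau>. is_atom a \<and> is_nmap n \<tau>}"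

definition FF :: "'a \<Rightarrow> (nat \<Rightarrow> 'a \<times> nat) set" where
  "FF x = {seqf n a \<tau> | a \<tau>. is_atom a \<and> is_nmap n \<tau> \<and> a \<le> s_tau n ss sw \<tau> x}"

lemma n0: "0 < n" using n2 by simp

lemma DD_mem: "(q \<in> DD) = (\<exists>a \<tau>. q = seqf n a \<tau> \<and> is_atom a \<and> is_nmap n \<tau>)"
  unfolding DD_def by (rule mem_Collect_eq)

lemma FF_mem: "(q \<in> FF x) = (\<exists>a \<tau>. q = seqf n a \<tau> \<and> is_atom a \<and> is_nmap n \<tau> \<and> a \<le> s_tau n ss sw \<tau> x)"
  unfolding FF_def by (rule mem_Collect_eq)

lemma memFF: "is_atom a \<Longrightarrow> is_nmap n \<tau> \<Longrightarrow> (seqf n a \<tau> \<in> FF x) = (a \<le> s_tau n ss sw \<tau> x)"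
proof
  assume "seqf n a \<tau> \<in> FF x"
  then obtain b \<sigma> where b: "seqf n a \<tau> = seqf n b \<sigma>" "is_atom b" "is_nmap n \<sigma>" "b \<le> s_tau n ss sw \<sigma> x"
    unfolding FF_mem by (elim exE conjE)
  then have "a = b \<and> (\<forall>k<n. \<tau> k = \<sigma> k)" using seqf_eq[OF n0 b(1)] by simp
  then show "a \<le> s_tau n ss sw \<tau> x" using b S_cong[of n \<tau> \<sigma> ss sw] by simp
next
  assume "is_atom a" "is_nmap n \<tau>" "a \<le> s_tau n ss sw \<tau> x"
  then show "seqf n a \<tau> \<in> FF x" unfolding FF_mem by (intro exI[of _ a] exI[of _ \<tau>]) simp
qed

lemma FF_sub: "FF x \<subseteq> DD"
proof
  fix q assume "q \<in> FF x"
  then obtain a \<tau> where "q = seqf n a \<tau>" "is_atom a" "is_nmap n \<tau>"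
    unfolding FF_mem by (elim exE conjE)
  then show "q \<in> DD" unfolding DD_mem by blast
qed

lemma pointwise:
  assumes "\<And>a \<tau>. is_atom a \<Longrightarrow> is_nmap n \<tau> \<Longrightarrow> (seqf n a \<tau> \<in> A) = (seqf n a \<tau> \<in> B)"
    and "A \<subseteq> DD" and "B \<subseteq> DD"
  shows "A = B"
proof (rule set_eqI)
  fix q show "(q \<in> A) = (q \<in> B)"
  proof (cases "q \<in> DD")
    case True
    then obtain a \<tau> where "q = seqf n a \<tau>" "is_atom a" "is_nmap n \<tau>" unfolding DD_mem by (elim exE conjE)
    then show ?thesis using assms(1) by simp
  next
    case False then show ?thesis using assms(2,3) by blast
  qed
qed

lemma seqf_DD: "is_atom a \<Longrightarrow> is_nmap n \<tau> \<Longrightarrow> seqf n a \<tau> \<in> DD" unfolding DD_mem by (intro exI[of _ a] exI[of _ \<tau>]) simp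

lemma some_atom:
  assumes b: "is_atom b" and t: "is_nmap n \<tau>"
  obtains c where "is_atom c" "b \<le> s_tau n ss sw \<tau> c"
proof -
  have "\<exists>c. is_atom c \<and> b \<le> s_tau n ss sw \<tau> c"
  proof (rule ccontr)
    assume nc: "\<not> ?thesis"
    have "\<forall>y\<in>{s_tau n ss sw \<tau> x | x. is_atom x}. y \<le> - b"
    proof
      fix y assume "y \<in> {s_tau n ss sw \<tau> x | x. is_atom x}"
      then obtain x where x: "is_atom x" "y = s_tau n ss sw \<tau> x" by blast
      then have "\<not> b \<le> y" using nc by blast
      then have "b \<le> - y" using atom_compl[OF b, of y] by simp
      then show "y \<le> - b" by (rule compl_le_swap1)
    qed
    moreover have "is_sum {s_tau n ss sw \<tau> x | x. is_atom x} top" using sums t by simp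
    ultimately have "top \<le> - b" unfolding is_sum_def by simp
    then have "- b = top" by (simp add: top_unique)
    then have "b = - top" by (metis double_compl)
    then have "b = bot" by simp
    then show False using b unfolding is_atom_def by simp
  qed
  then obtain c where "is_atom c" "b \<le> s_tau n ss sw \<tau> c" by (elim exE conjE)
  then show ?thesis by (rule that)
qed

lemma key:
  assumes b: "is_atom b" and t: "is_nmap n \<tau>" and P: "is_prod Y p"
    and Y: "\<forall>y\<in>Y. b \<le> s_tau n ss sw \<tau> y"
  shows "b \<le> s_tau n ss sw \<tau> p"
proof -
  obtain c where c: "is_atom c" "b \<le> s_tau n ss sw \<tau> c" using some_atom[OF b t] by blast
  have "c \<le> y" if y: "y \<in> Y" for y
  proof (rule atom_inf[OF c(1)], rule notI)
    assume e: "c \<sqinter> y = bot"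
    have "b \<le> s_tau n ss sw \<tau> c \<sqinter> s_tau n ss sw \<tau> y" using c Y y by simp
    also have "\<dots> = s_tau n ss sw \<tau> (c \<sqinter> y)" using S_inf[OF SA t] by simp
    also have "\<dots> = bot" using e S_bot[OF SA t] by simp
    finally show False using b unfolding is_atom_def by (simp add: bot_unique)
  qed
  then have "c \<le> p" using P unfolding is_prod_def by blast
  then have "s_tau n ss sw \<tau> c \<le> s_tau n ss sw \<tau> p" by (rule S_mono[OF SA t])
  then show ?thesis using c by simp
qed

lemma inj_FF: "inj FF"
proof (rule injI)
  fix x y assume e: "FF x = FF y"
  show "x = y"
  proof (rule ccontr)
    assume ne: "x \<noteq> y"
    have "\<exists>a. is_atom a \<and> a \<le> x \<and> \<not> a \<le> y \<or> is_atom a \<and> a \<le> y \<and> \<not> a \<le> x"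
    proof (cases "x \<sqinter> - y = bot")
      case False
      then obtain a where a: "is_atom a" "a \<le> x \<sqinter> - y" using at unfolding atomic_def by blast
      then have "a \<le> x" "a \<le> - y" by simp_all
      then have "a \<le> x" "\<not> a \<le> y" using atom_compl[OF a(1), of y] by simp_all
      then show ?thesis using a(1) by blast
    next
      case True
      then have xy: "x \<le> y" by (simp add: inf_shunt)
      then have "y \<sqinter> - x \<noteq> bot" using ne by (simp add: inf_shunt antisym)
      then obtain a where a: "is_atom a" "a \<le> y \<sqinter> - x" using at unfolding atomic_def by blast
      then have "a \<le> y" "a \<le> - x" by simp_all
      then have "a \<le> y" "\<not> a \<le> x" using atom_compl[OF a(1), of x] by simp_all
      then show ?thesis using a(1) by blast
    qed
    then obtain a where a: "is_atom a" "(a \<le> x) \<noteq> (a \<le> y)" by blast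
    have "(seqf n a id \<in> FF x) = (seqf n a id \<in> FF y)" using e by simp
    then show False using a memFF[OF a(1) nmap_id] S_id[OF SA] by simp
  qed
qed

lemma FF_inf: "FF (x \<sqinter> y) = FF x \<inter> FF y"
  by (rule pointwise) (auto simp: memFF S_inf[OF SA] intro: FF_sub[THEN subsetD])

lemma FF_compl: "FF (- x) = DD - FF x"
  by (rule pointwise) (auto simp: memFF S_compl[OF SA] atom_compl seqf_DD intro: FF_sub[THEN subsetD])

lemma FF_ss: "i \<noteq> j \<Longrightarrow> i < n \<Longrightarrow> j < n \<Longrightarrow> FF (ss i j x) = {q\<in>DD. q \<circ> repl_map i j \<in> FF x}"
  by (rule pointwise) (auto simp: memFF S_ss[OF SA] seqf_repl nmap_repl seqf_DD intro: FF_sub[THEN subsetD])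

lemma FF_sw: "i \<noteq> j \<Longrightarrow> i < n \<Longrightarrow> j < n \<Longrightarrow> FF (sw i j x) = {q\<in>DD. q \<circ> transp_map i j \<in> FF x}"
  by (rule pointwise) (auto simp: memFF S_sw[OF SA] seqf_transp nmap_transp seqf_DD intro: FF_sub[THEN subsetD])

lemma FF_prod: "is_prod Y p \<Longrightarrow> FF p = DD \<inter> \<Inter> (FF ` Y)"
proof (rule pointwise)
  fix a :: 'a and \<tau> assume a: "is_atom a" and t: "is_nmap n \<tau>" and P: "is_prod Y p"
  show "(seqf n a \<tau> \<in> FF p) = (seqf n a \<tau> \<in> DD \<inter> \<Inter> (FF ` Y))"
  proof
    assume "seqf n a \<tau> \<in> FF p"
    then have "a \<le> s_tau n ss sw \<tau> p" using memFF[OF a t] by simp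
    moreover have "s_tau n ss sw \<tau> p \<le> s_tau n ss sw \<tau> y" if "y \<in> Y" for y
      using P that S_mono[OF SA t] unfolding is_prod_def by blast
    ultimately show "seqf n a \<tau> \<in> DD \<inter> \<Inter> (FF ` Y)"
      using memFF[OF a t] seqf_DD[OF a t] by (auto intro: order_trans)
  next
    assume "seqf n a \<tau> \<in> DD \<inter> \<Inter> (FF ` Y)"
    then have "\<forall>y\<in>Y. a \<le> s_tau n ss sw \<tau> y" using memFF[OF a t] by auto
    then show "seqf n a \<tau> \<in> FF p" using key[OF a t P] memFF[OF a t] by simp
  qed
qed (use FF_sub in auto)

lemma dir1: "completely_representable_in TYPE('a \<times> nat) n ss sw"
  unfolding completely_representable_in_def
proof (intro exI conjI)
  show "dipermutable n (UNIV :: ('a \<times> nat) set) DD"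
    unfolding dipermutable_def
  proof (intro conjI ballI allI impI)
    show "DD \<subseteq> nseqs n UNIV"
    proof
      fix q assume "q \<in> DD"
      then obtain a \<tau> where "q = seqf n a \<tau>" unfolding DD_mem by (elim exE conjE)
      then show "q \<in> nseqs n UNIV" unfolding nseqs_def by (simp add: seqf_def)
    qed
  next
    fix s i j assume s: "s \<in> DD" and ij: "i \<noteq> j \<and> i < n \<and> j < n"
    then obtain a \<tau> where "s = seqf n a \<tau>" "is_atom a" "is_nmap n \<tau>" unfolding DD_mem by (elim exE conjE)
    then show "s \<circ> repl_map i j \<in> DD" "s \<circ> transp_map i j \<in> DD"
      using ij by (simp_all add: seqf_repl seqf_transp nmap_repl nmap_transp seqf_DD)
  qed
  show "complete_rep n ss sw DD FF"
    unfolding complete_rep_def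
  proof (intro conjI allI impI)
    show "\<And>x. FF x \<subseteq> DD" by (rule FF_sub)
    show "inj FF" by (rule inj_FF)
    show "\<And>x y. FF (x \<sqinter> y) = FF x \<inter> FF y" by (rule FF_inf)
    show "\<And>x. FF (- x) = DD - FF x" by (rule FF_compl)
    show "\<And>i j x. i \<noteq> j \<and> i < n \<and> j < n \<Longrightarrow> FF (ss i j x) = {q\<in>DD. q \<circ> repl_map i j \<in> FF x}"
      using FF_ss by blast
    show "\<And>i j x. i \<noteq> j \<and> i < n \<and> j < n \<Longrightarrow> FF (sw i j x) = {q\<in>DD. q \<circ> transp_map i j \<in> FF x}"
      using FF_sw by blast
    show "\<And>Y a. is_prod Y a \<Longrightarrow> FF a = DD \<inter> \<Inter> (FF ` Y)" by (rule FF_prod)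
  qed
qed

end



context
  fixes n :: nat and ss sw :: "nat \<Rightarrow> nat \<Rightarrow> 'a::boolean_algebra \<Rightarrow> 'a"
    and U :: "'b set" and D :: "(nat \<Rightarrow> 'b) set" and f :: "'a \<Rightarrow> (nat \<Rightarrow> 'b) set"
  assumes SA: "SA n ss sw"
    and dp: "dipermutable n U D" and cr: "complete_rep n ss sw D f"
begin

lemma crs: "\<forall>x. f x \<subseteq> D" "inj f" "\<forall>x y. f (x \<sqinter> y) = f x \<inter> f y" "\<forall>x. f (- x) = D - f x"
  "\<forall>i j x. i \<noteq> j \<and> i < n \<and> j < n \<longrightarrow>
          f (ss i j x) = {q\<in>D. q \<circ> repl_map i j \<in> f x} \<and>
          f (sw i j x) = {q\<in>D. q \<circ> transp_map i j \<in> f x}"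
  "\<forall>Y a. is_prod Y a \<longrightarrow> f a = D \<inter> \<Inter> (f ` Y)"
proof -
  note C = cr[unfolded complete_rep_def]
  show "\<forall>x. f x \<subseteq> D" by (rule C[THEN conjunct1])
  show "inj f" by (rule C[THEN conjunct2, THEN conjunct1])
  show "\<forall>x y. f (x \<sqinter> y) = f x \<inter> f y" by (rule C[THEN conjunct2, THEN conjunct2, THEN conjunct1])
  show "\<forall>x. f (- x) = D - f x" by (rule C[THEN conjunct2, THEN conjunct2, THEN conjunct2, THEN conjunct1])
  show "\<forall>i j x. i \<noteq> j \<and> i < n \<and> j < n \<longrightarrow>
          f (ss i j x) = {q\<in>D. q \<circ> repl_map i j \<in> f x} \<and>
          f (sw i j x) = {q\<in>D. q \<circ> transp_map i j \<in> f x}"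
    by (rule C[THEN conjunct2, THEN conjunct2, THEN conjunct2, THEN conjunct2, THEN conjunct1])
  show "\<forall>Y a. is_prod Y a \<longrightarrow> f a = D \<inter> \<Inter> (f ` Y)"
    by (rule C[THEN conjunct2, THEN conjunct2, THEN conjunct2, THEN conjunct2, THEN conjunct2])
qed

lemma f_sub: "f x \<subseteq> D" using crs(1) by (rule spec)
lemma f_inf: "f (x \<sqinter> y) = f x \<inter> f y" using crs(3) by simp
lemma f_compl: "f (- x) = D - f x" using crs(4) by (rule spec)
lemma f_inj: "inj f" by (rule crs(2))
lemma f_prod: "is_prod Y a \<Longrightarrow> f a = D \<inter> \<Inter> (f ` Y)" using crs(6) by simp
lemma f_ss: "i \<noteq> j \<Longrightarrow> i < n \<Longrightarrow> j < n \<Longrightarrow> f (ss i j x) = {q\<in>D. q \<circ> repl_map i j \<in> f x}"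
  using crs(5) by simp
lemma f_sw: "i \<noteq> j \<Longrightarrow> i < n \<Longrightarrow> j < n \<Longrightarrow> f (sw i j x) = {q\<in>D. q \<circ> transp_map i j \<in> f x}"
  using crs(5) by simp

lemma f_bot: "f bot = {}"
proof -
  have "f (bot \<sqinter> - bot) = f bot \<inter> (D - f bot)" by (simp only: f_inf f_compl)
  then show ?thesis using f_sub by auto
qed

lemma f_top: "f top = D"
proof -
  have "f (- bot) = D - f bot" by (rule f_compl)
  then show ?thesis using f_bot by simp
qed

lemma f_mono: "x \<le> y \<Longrightarrow> f x \<subseteq> f y"
proof -
  assume "x \<le> y"
  then have "f x = f (x \<sqinter> y)" by (simp add: inf.absorb1)
  then show ?thesis using f_inf by auto
qed

lemma f_ne: "x \<noteq> bot \<Longrightarrow> f x \<noteq> {}"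
proof
  assume "x \<noteq> bot" "f x = {}"
  then have "f x = f bot" using f_bot by simp
  then have "x = bot" by (rule injD[OF f_inj])
  then show False using \<open>x \<noteq> bot\<close> by simp
qed

lemma both_bot: "(x::'a) \<le> c \<Longrightarrow> x \<le> - c \<Longrightarrow> x = bot"
proof -
  assume "x \<le> c" "x \<le> - c"
  then have "x \<le> c \<sqinter> - c" by (rule le_infI)
  then show ?thesis by (simp add: bot_unique)
qed

lemma ntop: "\<not> top \<le> (c::'a) \<Longrightarrow> - c \<noteq> bot"
proof
  assume "\<not> top \<le> c" "- c = bot"
  then have "c = top" by (metis double_compl compl_bot_eq)
  then show False using \<open>\<not> top \<le> c\<close> by simp
qed

lemma f_sum:
  assumes s: "is_sum X s" shows "f s = \<Union> (f ` X)"
proof -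
  have P: "is_prod (uminus ` X) (- s)"
    using s unfolding is_sum_def is_prod_def
    by (auto simp: compl_le_swap1 compl_le_swap2)
  have "f (- s) = D \<inter> \<Inter> (f ` uminus ` X)" by (rule f_prod[OF P])
  then have "D - f s = D \<inter> (\<Inter>x\<in>X. D - f x)" by (simp add: f_compl image_image)
  then show ?thesis using f_sub by blast
qed

lemma D_word: "word_ok n w \<Longrightarrow> q \<in> D \<Longrightarrow> q \<circ> word_hat w \<in> D"
proof (induction w arbitrary: q)
  case Nil then show ?case by simp
next
  case (Cons l w)
  then have ok: "word_ok n w" "letter_ok n l" by (auto simp: word_ok_def)
  have "q \<circ> letter_map l \<in> D"
    using dp Cons.prems(2) ok(2) unfolding dipermutable_def by (cases l) auto
  then have "(q \<circ> letter_map l) \<circ> word_hat w \<in> D" using Cons.IH ok(1) by blast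
  then show ?case by (simp only: word_hat.simps comp_assoc)
qed

lemma f_word: "word_ok n w \<Longrightarrow> q \<in> D \<Longrightarrow> (q \<in> f (word_eval ss sw w x)) = (q \<circ> word_hat w \<in> f x)"
proof (induction w arbitrary: q)
  case Nil then show ?case by simp
next
  case (Cons l w)
  then have ok: "word_ok n w" "letter_ok n l" by (auto simp: word_ok_def)
  have qD: "q \<circ> letter_map l \<in> D"
    using dp Cons.prems(2) ok(2) unfolding dipermutable_def by (cases l) auto
  have "(q \<in> f (word_eval ss sw (l # w) x)) = (q \<circ> letter_map l \<in> f (word_eval ss sw w x))"
    using ok(2) Cons.prems(2) by (cases l) (auto simp: f_ss f_sw)
  also have "\<dots> = ((q \<circ> letter_map l) \<circ> word_hat w \<in> f x)" using Cons.IH[OF ok(1) qD] .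
  finally show ?case by (simp only: word_hat.simps comp_assoc)
qed

lemma dir2_atomic: "atomic TYPE('a)"
  unfolding atomic_def
proof (intro allI impI)
  fix x :: 'a assume x: "x \<noteq> bot"
  show "\<exists>a. is_atom a \<and> a \<le> x"
  proof (rule ccontr)
    assume na: "\<not> (\<exists>a. is_atom a \<and> a \<le> x)"
    obtain q where q: "q \<in> f x" using f_ne[OF x] by blast
    define X where "X = {b. b \<le> x \<and> q \<notin> f b}"
    have "is_sum X x" unfolding is_sum_def
    proof (intro conjI allI impI ballI)
      fix b assume "b \<in> X" then show "b \<le> x" by (simp add: X_def)
    next
      fix c assume up: "\<forall>b\<in>X. b \<le> c"
      show "x \<le> c"
      proof (rule ccontr)
        assume "\<not> x \<le> c"
        define e where "e = x \<sqinter> - c"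
        have ene: "e \<noteq> bot" using \<open>\<not> x \<le> c\<close> by (simp add: e_def inf_shunt)
        have ex: "e \<le> x" by (simp add: e_def)
        have "\<not> is_atom e" using na ex by blast
        then obtain d where d: "d \<le> e" "d \<noteq> bot" "d \<noteq> e" using ene unfolding is_atom_def by blast
        define d2 where "d2 = e \<sqinter> - d"
        have d2ne: "d2 \<noteq> bot"
        proof
          assume "d2 = bot"
          then have "e \<le> d" by (simp add: d2_def inf_shunt)
          then show False using d by (simp add: antisym)
        qed
        have "d \<sqinter> d2 = bot" by (simp add: d2_def inf_commute inf_left_commute)
        moreover have "f (d \<sqinter> d2) = f d \<inter> f d2" by (rule f_inf)
        ultimately have "f d \<inter> f d2 = {}" using f_bot by simp
        have d2e: "d2 \<le> e" by (simp add: d2_def)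
        have ec: "e \<le> - c" by (simp add: e_def)
        have "q \<notin> f d \<or> q \<notin> f d2" using \<open>f d \<inter> f d2 = {}\<close> by blast
        moreover have "d \<le> x" "d2 \<le> x" using order_trans[OF d(1) ex] order_trans[OF d2e ex] by simp_all
        ultimately have "d \<in> X \<or> d2 \<in> X" by (auto simp: X_def)
        then have "d \<le> c \<or> d2 \<le> c" using up by blast
        moreover have "d \<le> - c" "d2 \<le> - c" using order_trans[OF d(1) ec] order_trans[OF d2e ec] by simp_all
        ultimately have "d = bot \<or> d2 = bot" using both_bot by blast
        then show False using d d2ne by blast
      qed
    qed
    then have "f x = \<Union> (f ` X)" by (rule f_sum)
    then show False using q unfolding X_def by blast
  qed
qed

lemma dir2_sums:
  assumes t: "is_nmap n \<tau>"
  shows "is_sum {s_tau n ss sw \<tau> x | x. is_atom x} top"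
  unfolding is_sum_def
proof (intro conjI allI impI ballI)
  fix y :: 'a show "y \<le> top" by simp
next
  fix c assume up: "\<forall>y\<in>{s_tau n ss sw \<tau> x | x. is_atom x}. y \<le> c"
  show "top \<le> c"
  proof (rule ccontr)
    assume "\<not> top \<le> c"
    then have "- c \<noteq> bot" by (rule ntop)
    then obtain q where q: "q \<in> f (- c)" using f_ne by blast
    then have qD: "q \<in> D" using f_sub by blast
    obtain w where w: "word_ok n w" "s_tau n ss sw \<tau> = word_eval ss sw w" using get_word[OF SA t] by blast
    have "q \<circ> word_hat w \<in> D" by (rule D_word[OF w(1) qD])
    moreover have "is_sum {a::'a. is_atom a} top"
      unfolding is_sum_def
    proof (intro conjI allI impI ballI)
      fix b :: 'a assume ub: "\<forall>x\<in>{a::'a. is_atom a}. x \<le> b"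
      show "top \<le> b"
      proof (rule ccontr)
        assume "\<not> top \<le> b"
        then have "- b \<noteq> bot" by (rule ntop)
        then obtain a where a: "is_atom a" "a \<le> - b" using dir2_atomic unfolding atomic_def by blast
        then have "a \<le> b" using ub by blast
        then show False using a atom_compl by blast
      qed
    qed simp
    then have "f top = \<Union> (f ` {a. is_atom a})" by (rule f_sum)
    ultimately obtain a where a: "is_atom a" "q \<circ> word_hat w \<in> f a" using f_top by auto
    then have "q \<in> f (s_tau n ss sw \<tau> a)" using f_word[OF w(1) qD] w(2) by simp
    moreover have "s_tau n ss sw \<tau> a \<le> c" using up a by blast
    ultimately have "q \<in> f c" using f_mono by blast
    then show False using q f_compl by blast
  qed
qed

end



theorem mainTheorem11:
  fixes n :: nat
    and ss sw :: "nat \<Rightarrow> nat \<Rightarrow> 'a::boolean_algebra \<Rightarrow> 'a"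
  assumes "2 \<le> n" and "SA n ss sw"
  shows "((atomic TYPE('a) \<and>
            (\<forall>\<tau>. is_nmap n \<tau> \<longrightarrow> is_sum {s_tau n ss sw \<tau> x | x. is_atom x} top))
           \<longrightarrow> completely_representable_in TYPE('a \<times> nat) n ss sw)
       \<and> (completely_representable_in TYPE('b) n ss sw
           \<longrightarrow> (atomic TYPE('a) \<and>
                (\<forall>\<tau>. is_nmap n \<tau> \<longrightarrow> is_sum {s_tau n ss sw \<tau> x | x. is_atom x} top)))"
proof (intro conjI impI)
  assume H: "atomic TYPE('a) \<and>
            (\<forall>\<tau>. is_nmap n \<tau> \<longrightarrow> is_sum {s_tau n ss sw \<tau> x | x. is_atom x} top)"
  show "completely_representable_in TYPE('a \<times> nat) n ss sw"
    by (rule dir1[OF assms(2) assms(1) H[THEN conjunct1] H[THEN conjunct2]])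
next
  assume "completely_representable_in TYPE('b) n ss sw"
  then obtain U :: "'b set" and D f where dp: "dipermutable n U D" and cr: "complete_rep n ss sw D f"
    unfolding completely_representable_in_def by (elim exE conjE)
  show "atomic TYPE('a)" by (rule dir2_atomic[OF assms(2) dp cr])
  show "\<forall>\<tau>. is_nmap n \<tau> \<longrightarrow> is_sum {s_tau n ss sw \<tau> x | x. is_atom x} top"
    using dir2_sums[OF assms(2) dp cr] by blast
qed

end
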